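(* Let $k\ge1$ and $t\ge0$ be integers, and let $P_j=\prod_{i=1}^{j}\big(1-\frac{1}{2^i}\big)$. Regarding each of the following as functions of $n$ variables for any $n$ at least the largest variable index appearing, we have: \[\mathrm{dt}_k(x_1\cdots x_k)=P_k,\] \[\mathrm{dt}_k(x_1\cdots x_k\oplus x_{k+1}\cdots x_{2k})=2P_k(1-P_k),\] \[\mathrm{dt}_{k+t}\big(x_{2k+1}\cdots x_{2k+t}(x_1\cdots x_k\oplus x_{k+1}\cdots x_{2k})\big)=2P_{k+t}(1-P_k).\]
   Context: $\oplus$ denotes addition in $\mathbb{F}_2$ and $\mathbb{F}_2^n$. For $f:\mathbb{F}_2^n\to\mathbb{F}_2$ and $1\le k\le n$, \[\mathrm{dt}_k(f)=\frac{\big|\{(u_0,\dots,u_k)\in(\mathbb{F}_2^n)^{k+1}:\ \bigoplus_{c_1,\dots,c_k\in\mathbb{F}_2} f\big((\bigoplus_{i=1}^k c_iu_i)\oplus u_0\big)\neq0\}\big|}{2^{(k+1)n}}.\] *)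

theory Defs
  imports Complex_Main "HOL-Library.FuncSet"
begin

text \<open>F_2 is modelled by bool (addition = xor = (\<noteq>), multiplication = conjunction).
  A vector of F_2^n is a function nat \<Rightarrow> bool supported on the coordinates {1..n}.
  A Boolean function of n variables is any f :: (nat \<Rightarrow> bool) \<Rightarrow> bool; only its values
  on cube n matter.\<close>

definition cube :: "nat \<Rightarrow> (nat \<Rightarrow> bool) set" where
  "cube n = {u. \<forall>j. u j \<longrightarrow> j \<in> {1..n}}"

text \<open>The point (c_1 u_1 + ... + c_k u_k) + u_0, where the coefficient vector c is encoded by
  the set C = {i. c_i = 1} \<subseteq> {1..k}; the xor of a family of bits is the parity of the number
  of true bits.\<close>
definition comb :: "(nat \<Rightarrow> (nat \<Rightarrow> bool)) \<Rightarrow> (nat \<Rightarrow> bool) \<Rightarrow> nat set \<Rightarrow> (nat \<Rightarrow> bool)" where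
  "comb us u0 C = (\<lambda>j. u0 j \<noteq> odd (card {i \<in> C. us i j}))"

definition deriv_val :: "nat \<Rightarrow> ((nat \<Rightarrow> bool) \<Rightarrow> bool) \<Rightarrow> (nat \<Rightarrow> (nat \<Rightarrow> bool)) \<Rightarrow> (nat \<Rightarrow> bool) \<Rightarrow> bool" where
  "deriv_val k f us u0 = odd (card {C \<in> Pow {1..k}. f (comb us u0 C)})"

definition dt :: "nat \<Rightarrow> nat \<Rightarrow> ((nat \<Rightarrow> bool) \<Rightarrow> bool) \<Rightarrow> real" where
  "dt k n f = real (card {(u0, us). u0 \<in> cube n \<and> us \<in> PiE {1..k} (\<lambda>_. cube n)
                                   \<and> deriv_val k f us u0})
              / 2 ^ ((k + 1) * n)"

definition Pk :: "nat \<Rightarrow> real" where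
  "Pk j = (\<Prod>i=1..j. 1 - 1 / 2 ^ i)"

end

theory Submission
  imports Defs
begin


definition sd :: "'a set \<Rightarrow> 'a set \<Rightarrow> 'a set" where
  "sd A B = (A - B) \<union> (B - A)"

lemma odd_card_sd:
  assumes "finite A" "finite B"
  shows "odd (card (sd A B)) \<longleftrightarrow> (odd (card A) \<noteq> odd (card B))"
proof -
  have 1: "card (sd A B) = card (A - B) + card (B - A)"
    unfolding sd_def using assms by (intro card_Un_disjoint) auto
  have 2: "card A = card (A - B) + card (A \<inter> B)"
    using assms by (metis Diff_Diff_Int card_Diff_subset_Int card_mono Int_lower1 le_add_diff_inverse2 finite_Diff
       Int_commute  inf.cobounded1 card_Int_Diff Diff_Int_distrib2 add.commute)
  have 3: "card B = card (B - A) + card (A \<inter> B)"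
    using assms by (metis Int_commute card_Int_Diff add.commute)
  show ?thesis using 1 2 3 by presburger
qed

lemma sd_empty_iff: "sd A B = {} \<longleftrightarrow> A = B"
  unfolding sd_def by auto

lemma even_sum_iff:
  fixes f :: "'a \<Rightarrow> nat"
  assumes "finite A"
  shows "even (sum f A) \<longleftrightarrow> even (card {a\<in>A. odd (f a)})"
  using assms
proof (induction A rule: finite_induct)
  case empty then show ?case by simp
next
  case (insert x A)
  have "{a\<in>insert x A. odd (f a)} = (if odd (f x) then insert x {a\<in>A. odd (f a)} else {a\<in>A. odd (f a)})"
    by auto
  then show ?case using insert by (auto simp: card_insert_if)
qed

lemma even_card_involution:
  assumes "finite F" "\<And>x. x \<in> F \<Longrightarrow> s x \<in> F" "\<And>x. x \<in> F \<Longrightarrow> s (s x) = x"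
    "\<And>x. x \<in> F \<Longrightarrow> s x \<noteq> x"
  shows "even (card F)"
  using assms
proof (induction "card F" arbitrary: F rule: less_induct)
  case less
  show ?case
  proof (cases "F = {}")
    case True then show ?thesis by simp
  next
    case False
    then obtain a where a: "a \<in> F" by blast
    define F' where "F' = F - {a, s a}"
    have sa: "s a \<in> F" "s a \<noteq> a" using less a by auto
    have cF: "card F = card F' + 2"
    proof -
      have "{a, s a} \<subseteq> F" using a sa by auto
      moreover have "card {a, s a} = 2" using sa by simp
      ultimately have "card {a, s a} \<le> card F" using less.prems(1) card_mono by blast
      then show ?thesis unfolding F'_def using less.prems(1) a sa \<open>card {a, s a} = 2\<close> \<open>{a, s a} \<subseteq> F\<close>
        by (simp add: card_Diff_subset)
    qed
    have "even (card F')"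
    proof (rule less.hyps)
      show "card F' < card F" using cF by simp
      show "finite F'" unfolding F'_def using less by auto
      fix x assume x: "x \<in> F'"
      then show "s (s x) = x" "s x \<noteq> x" unfolding F'_def using less by auto
      have xF: "x \<in> F" "x \<noteq> a" "x \<noteq> s a" using x unfolding F'_def by auto
      have "s x \<noteq> a" using xF less.prems(3)[of x] by metis
      moreover have "s x \<noteq> s a" using xF less.prems(3)[of x] less.prems(3)[of a] a by metis
      ultimately show "s x \<in> F'" unfolding F'_def using xF less.prems(2) by auto
    qed
    then show ?thesis using cF by simp
  qed
qed



definition phi :: "(nat \<Rightarrow> nat \<Rightarrow> bool) \<Rightarrow> nat set \<Rightarrow> nat set \<Rightarrow> nat set" where
  "phi M C J = {j\<in>J. odd (card {i\<in>C. M i j})}"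

definition ind :: "(nat \<Rightarrow> nat \<Rightarrow> bool) \<Rightarrow> nat set \<Rightarrow> nat set \<Rightarrow> bool" where
  "ind M I J \<longleftrightarrow> (\<forall>X\<subseteq>I. X \<noteq> {} \<longrightarrow> phi M X J \<noteq> {})"

lemma phi_sd:
  assumes "finite C" "finite D"
  shows "phi M (sd C D) J = sd (phi M C J) (phi M D J)"
proof -
  have "\<And>j. {i\<in>sd C D. M i j} = sd {i\<in>C. M i j} {i\<in>D. M i j}"
    unfolding sd_def by auto
  then show ?thesis using assms odd_card_sd[of "{i\<in>C. M i _}" "{i\<in>D. M i _}"]
    unfolding phi_def sd_def by auto
qed

lemma phi_subset: "phi M C J \<subseteq> J" unfolding phi_def by auto

lemma ind_inj:
  assumes "finite I" "ind M I J"
  shows "inj_on (\<lambda>C. phi M C J) (Pow I)"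
proof (rule inj_onI)
  fix C D assume C: "C \<in> Pow I" and D: "D \<in> Pow I" and e: "phi M C J = phi M D J"
  have fC: "finite C" "finite D" using C D assms(1) finite_subset by auto
  have "phi M (sd C D) J = {}" using phi_sd[OF fC] e by (simp add: sd_empty_iff)
  moreover have "sd C D \<subseteq> I" using C D unfolding sd_def by auto
  ultimately have "sd C D = {}" using assms(2) unfolding ind_def by blast
  then show "C = D" by (simp add: sd_empty_iff)
qed

lemma ind_card_image:
  assumes "finite I" "ind M I J"
  shows "card ((\<lambda>C. phi M C J) ` Pow I) = 2 ^ card I"
  using card_image[OF ind_inj[OF assms]] assms(1) by (simp add: card_Pow)

lemma ind_mono: "ind M I J \<Longrightarrow> I' \<subseteq> I \<Longrightarrow> ind M I' J"
  unfolding ind_def by blast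

lemma phi_cong: "(\<And>i j. i \<in> C \<Longrightarrow> j \<in> J \<Longrightarrow> M i j = M' i j) \<Longrightarrow> phi M C J = phi M' C J"
proof -
  assume h: "\<And>i j. i \<in> C \<Longrightarrow> j \<in> J \<Longrightarrow> M i j = M' i j"
  have "\<And>j. j \<in> J \<Longrightarrow> {i\<in>C. M i j} = {i\<in>C. M' i j}" using h by auto
  then show ?thesis unfolding phi_def by auto
qed

lemma ind_cong: "(\<And>i j. i \<in> I \<Longrightarrow> j \<in> J \<Longrightarrow> M i j = M' i j) \<Longrightarrow> ind M I J = ind M' I J"
proof -
  assume h: "\<And>i j. i \<in> I \<Longrightarrow> j \<in> J \<Longrightarrow> M i j = M' i j"
  have "\<And>X. X \<subseteq> I \<Longrightarrow> phi M X J = phi M' X J" by (rule phi_cong) (use h in auto)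
  then show ?thesis unfolding ind_def by blast
qed

lemma ind_insert:
  assumes "a \<notin> Y" "finite Y"
  shows "ind (M(a:=x)) (insert a Y) I \<longleftrightarrow>
         ind M Y I \<and> {i\<in>I. x i} \<notin> (\<lambda>Z. phi M Z I) ` Pow Y"
proof -
  let ?M = "M(a:=x)"
  have p1: "phi ?M X I = phi M X I" if "X \<subseteq> Y" for X
    by (rule phi_cong) (use that assms in auto)
  have "\<And>j. {i\<in>{a}. ?M i j} = (if x j then {a} else {})" by auto
  then have pa: "phi ?M {a} I = {i\<in>I. x i}" unfolding phi_def by auto
  have p2: "phi ?M (insert a Z) I = sd (phi M Z I) {i\<in>I. x i}" if "Z \<subseteq> Y" for Z
  proof -
    have fZ: "finite Z" using that assms finite_subset by auto
    have "insert a Z = sd Z {a}" using that assms unfolding sd_def by auto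
    then have "phi ?M (insert a Z) I = sd (phi ?M Z I) (phi ?M {a} I)" using phi_sd[of Z "{a}" ?M I] fZ by simp
    then show ?thesis unfolding p1[OF that] pa .
  qed
  show ?thesis
  proof
    assume h: "ind ?M (insert a Y) I"
    have "ind ?M Y I" using ind_mono[OF h] by blast
    moreover have "ind ?M Y I = ind M Y I" by (rule ind_cong) (use assms in auto)
    ultimately have "ind M Y I" by simp
    moreover have "{i\<in>I. x i} \<noteq> phi M Z I" if "Z \<subseteq> Y" for Z
    proof -
      have "insert a Z \<subseteq> insert a Y" "insert a Z \<noteq> {}" using that by auto
      then have "phi ?M (insert a Z) I \<noteq> {}" using h unfolding ind_def by simp
      then show ?thesis using p2[OF that] by (metis sd_empty_iff)
    qed
    ultimately show "ind M Y I \<and> {i\<in>I. x i} \<notin> (\<lambda>Z. phi M Z I) ` Pow Y" by blast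
  next
    assume h: "ind M Y I \<and> {i\<in>I. x i} \<notin> (\<lambda>Z. phi M Z I) ` Pow Y"
    show "ind ?M (insert a Y) I" unfolding ind_def
    proof (intro allI impI)
      fix X assume X: "X \<subseteq> insert a Y" "X \<noteq> {}"
      show "phi ?M X I \<noteq> {}"
      proof (cases "a \<in> X")
        case True
        then have "X = insert a (X - {a})" by auto
        moreover have "X - {a} \<subseteq> Y" using X by auto
        moreover have "phi M (X - {a}) I \<in> (\<lambda>Z. phi M Z I) ` Pow Y" using \<open>X - {a} \<subseteq> Y\<close> by simp
        then have "{i\<in>I. x i} \<noteq> phi M (X - {a}) I" using h by metis
        ultimately show ?thesis using p2[of "X - {a}"] by (metis sd_empty_iff)
      next
        case False
        then have "X \<subseteq> Y" using X by auto
        then have "phi M X I \<noteq> {}" using h X(2) unfolding ind_def by blast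
        then show ?thesis using p1[OF \<open>X \<subseteq> Y\<close>] by simp
      qed
    qed
  qed
qed

lemma duality:
  assumes fI: "finite I" and fJ: "finite J" and c: "card I = card J" and h: "ind N J I"
  shows "ind (\<lambda>i j. N j i) I J"
  unfolding ind_def
proof (intro allI impI notI)
  fix X assume X: "X \<subseteq> I" "X \<noteq> {}" and e: "phi (\<lambda>i j. N j i) X J = {}"
  let ?psi = "\<lambda>Y. phi N Y I"
  have "?psi ` Pow J \<subseteq> Pow I" using phi_subset by auto
  moreover have "card (?psi ` Pow J) = card (Pow I)"
    using ind_card_image[OF fJ h] c fI by (simp add: card_Pow)
  ultimately have im: "?psi ` Pow J = Pow I" using fI by (simp add: card_subset_eq)
  obtain i0 where i0: "i0 \<in> X" using X by auto
  then have "{i0} \<in> Pow I" using X by auto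
  then obtain Y where Y: "Y \<subseteq> J" "phi N Y I = {i0}" using im by (metis PowD imageE)
  have fX: "finite X" using X fI finite_subset by auto
  have fY: "finite Y" using Y fJ finite_subset by auto
  have sw: "(\<Sum>i\<in>X. card {j\<in>Y. N j i}) = (\<Sum>j\<in>Y. card {i\<in>X. N j i})"
  proof -
    have "(\<Sum>i\<in>X. card {j\<in>Y. N j i}) = (\<Sum>i\<in>X. \<Sum>j\<in>Y. if N j i then 1 else 0)"
      using fY by (simp add: sum.If_cases Int_def)
    also have "\<dots> = (\<Sum>j\<in>Y. \<Sum>i\<in>X. if N j i then 1 else 0)" by (rule sum.swap)
    also have "\<dots> = (\<Sum>j\<in>Y. card {i\<in>X. N j i})"
      using fX by (simp add: sum.If_cases Int_def)
    finally show ?thesis .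
  qed
  have "even (\<Sum>j\<in>Y. card {i\<in>X. N j i})"
  proof (rule dvd_sum)
    fix j assume "j \<in> Y"
    then have "j \<notin> phi (\<lambda>i j. N j i) X J" using e by auto
    then show "even (card {i\<in>X. N j i})" using \<open>j \<in> Y\<close> Y unfolding phi_def by auto
  qed
  moreover have "odd (\<Sum>i\<in>X. card {j\<in>Y. N j i})"
  proof -
    have "{i\<in>X. odd (card {j\<in>Y. N j i})} = X \<inter> phi N Y I"
      using X unfolding phi_def by auto
    also have "\<dots> = {i0}" using Y i0 by auto
    finally show ?thesis using even_sum_iff[OF fX, of "\<lambda>i. card {j\<in>Y. N j i}"] by simp
  qed
  ultimately show False using sw by simp
qed

lemma duality_iff:
  assumes "finite I" "finite J" "card I = card J"
  shows "ind (\<lambda>i j. N j i) I J \<longleftrightarrow> ind N J I"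
  using duality[OF assms] duality[of J I "\<lambda>i j. N j i"] assms by (metis (no_types))



lemma deriv_xor:
  "deriv_val K (\<lambda>x. f x \<noteq> g x) us u0 \<longleftrightarrow> (deriv_val K f us u0 \<noteq> deriv_val K g us u0)"
proof -
  have "{C \<in> Pow {1..K}. f (comb us u0 C) \<noteq> g (comb us u0 C)} =
        sd {C \<in> Pow {1..K}. f (comb us u0 C)} {C \<in> Pow {1..K}. g (comb us u0 C)}"
    unfolding sd_def by auto
  then show ?thesis unfolding deriv_val_def by (simp add: odd_card_sd)
qed

lemma deriv_mono:
  assumes fS: "finite S" and cS: "card S = K"
  shows "deriv_val K (\<lambda>x. \<forall>i\<in>S. x i) us u0 \<longleftrightarrow> ind us {1..K} S"
proof -
  define b where "b = {j\<in>S. \<not> u0 j}"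
  have eqF: "{C \<in> Pow {1..K}. \<forall>j\<in>S. comb us u0 C j} = {C \<in> Pow {1..K}. phi us C S = b}"
    unfolding comb_def phi_def b_def by auto
  let ?F = "{C \<in> Pow {1..K}. phi us C S = b}"
  have fF: "finite ?F" by simp
  have dv: "deriv_val K (\<lambda>x. \<forall>i\<in>S. x i) us u0 = odd (card ?F)"
    unfolding deriv_val_def using eqF by simp
  show ?thesis
  proof (cases "ind us {1..K} S")
    case True
    have "(\<lambda>C. phi us C S) ` Pow {1..K} \<subseteq> Pow S" using phi_subset by auto
    moreover have "card ((\<lambda>C. phi us C S) ` Pow {1..K}) = card (Pow S)"
      using ind_card_image[OF _ True] fS cS by (simp add: card_Pow)
    ultimately have im: "(\<lambda>C. phi us C S) ` Pow {1..K} = Pow S" using fS by (simp add: card_subset_eq)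
    have "b \<in> Pow S" unfolding b_def by auto
    then obtain C0 where C0: "C0 \<in> Pow {1..K}" "phi us C0 S = b" using im by (metis imageE)
    have "?F = {C0}"
    proof
      show "{C0} \<subseteq> ?F" using C0 by auto
      show "?F \<subseteq> {C0}"
      proof
        fix C assume "C \<in> ?F"
        then have "C \<in> Pow {1..K}" "phi us C S = phi us C0 S" using C0 by auto
        then show "C \<in> {C0}" using ind_inj[OF _ True] C0(1) by (auto dest: inj_onD)
      qed
    qed
    then show ?thesis using dv True by simp
  next
    case False
    then obtain X where X: "X \<subseteq> {1..K}" "X \<noteq> {}" "phi us X S = {}"
      unfolding ind_def by blast
    have fX: "finite X" using X(1) finite_subset by auto
    have "even (card ?F)"
    proof (rule even_card_involution[where s = "\<lambda>C. sd C X"])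
      show "finite ?F" by simp
      fix C assume C: "C \<in> ?F"
      have fC: "finite C" using C finite_subset by auto
      show "sd C X \<in> ?F"
        using C X phi_sd[OF fC fX, of us S] unfolding sd_def by auto
      show "sd (sd C X) X = C" unfolding sd_def by auto
      show "sd C X \<noteq> C" using X(2) unfolding sd_def by auto
    qed
    then show ?thesis using dv False by simp
  qed
qed



lemma cube_bij: "bij_betw (\<lambda>x. {i. x i}) (cube d) (Pow {1..d})"
proof (rule bij_betw_byWitness[where f' = "\<lambda>A i. i \<in> A"])
  show "\<forall>a\<in>cube d. (\<lambda>i. i \<in> {i. a i}) = a" by auto
  show "\<forall>a'\<in>Pow {1..d}. {i. i \<in> a'} = a'" by auto
  show "(\<lambda>x. {i. x i}) ` cube d \<subseteq> Pow {1..d}" unfolding cube_def by auto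
  show "(\<lambda>A i. i \<in> A) ` Pow {1..d} \<subseteq> cube d" unfolding cube_def by auto
qed

lemma finite_cube: "finite (cube d)"
  using bij_betw_finite[OF cube_bij] by simp

lemma card_cube: "card (cube d) = 2 ^ d"
  using bij_betw_same_card[OF cube_bij] by (simp add: card_Pow)

lemma card_cube_filter:
  "card {x\<in>cube d. P {i\<in>{1..d}. x i}} = card {A\<in>Pow {1..d}. P A}"
proof -
  have "bij_betw (\<lambda>x. {i. x i}) {x\<in>cube d. P {i\<in>{1..d}. x i}} {A\<in>Pow {1..d}. P A}"
  proof (rule bij_betw_byWitness[where f' = "\<lambda>A i. i \<in> A"])
    show "\<forall>a\<in>{x\<in>cube d. P {i\<in>{1..d}. x i}}. (\<lambda>i. i \<in> {i. a i}) = a" by auto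
    show "\<forall>a'\<in>{A\<in>Pow {1..d}. P A}. {i. i \<in> a'} = a'" by auto
    have "\<And>x. x \<in> cube d \<Longrightarrow> {i\<in>{1..d}. x i} = {i. x i}" unfolding cube_def by auto
    then show "(\<lambda>x. {i. x i}) ` {x\<in>cube d. P {i\<in>{1..d}. x i}} \<subseteq> {A\<in>Pow {1..d}. P A}"
      unfolding cube_def by auto
    have "\<And>A. A \<subseteq> {1..d} \<Longrightarrow> {i\<in>{1..d}. i \<in> A} = A" by auto
    then show "(\<lambda>A i. i \<in> A) ` {A\<in>Pow {1..d}. P A} \<subseteq> {x\<in>cube d. P {i\<in>{1..d}. x i}}"
      unfolding cube_def by auto
  qed
  then show ?thesis by (rule bij_betw_same_card)
qed

lemma sum_PiE_insert:
  assumes "a \<notin> S"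
  shows "(\<Sum>g\<in>PiE (insert a S) T. h g) = (\<Sum>y\<in>T a. \<Sum>g\<in>PiE S T. h (g(a:=y)))"
proof -
  have "(\<Sum>g\<in>PiE (insert a S) T. h g) = (\<Sum>g\<in>(\<lambda>(y, g). g(a := y)) ` (T a \<times> PiE S T). h g)"
    by (simp only: PiE_insert_eq)
  also have "\<dots> = (\<Sum>p\<in>T a \<times> PiE S T. h ((\<lambda>(y, g). g(a := y)) p))"
    by (rule sum.reindex[OF inj_combinator[OF assms], unfolded comp_def])
  also have "\<dots> = (\<Sum>y\<in>T a. \<Sum>g\<in>PiE S T. h (g(a:=y)))"
    by (simp add: sum.cartesian_product case_prod_unfold)
  finally show ?thesis .
qed

definition mg :: "nat set \<Rightarrow> (nat \<Rightarrow> 'b) \<Rightarrow> (nat \<Rightarrow> 'b) \<Rightarrow> (nat \<Rightarrow> 'b)" where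
  "mg J v w = (\<lambda>x. if x \<in> J then v x else w x)"

lemma mg_upd: "a \<notin> I \<Longrightarrow> (mg I u v)(a:=y) = mg I u (v(a:=y))"
  unfolding mg_def by (auto simp: fun_eq_iff)

lemma sum_PiE_union:
  assumes "finite J" "I \<inter> J = {}"
  shows "(\<Sum>w\<in>PiE (I \<union> J) F. h w) = (\<Sum>u\<in>PiE I F. \<Sum>v\<in>PiE J F. h (mg I u v))"
  using assms
proof (induction J arbitrary: h rule: finite_induct)
  case empty
  have e: "(\<Sum>v\<in>PiE {} F. h (mg I u v)) = h u" if "u \<in> PiE I F" for u
  proof -
    have "mg I u (\<lambda>x. undefined) = u"
      unfolding mg_def fun_eq_iff using PiE_arb[OF that] by metis
    then show ?thesis by simp
  qed
  show ?case by (simp only: Un_empty_right sum.cong[OF refl e])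
next
  case (insert a J)
  have aI: "a \<notin> I \<union> J" using insert by auto
  have "(\<Sum>w\<in>PiE (I \<union> insert a J) F. h w) = (\<Sum>w\<in>PiE (insert a (I \<union> J)) F. h w)" by simp
  also have "\<dots> = (\<Sum>y\<in>F a. \<Sum>w\<in>PiE (I \<union> J) F. h (w(a:=y)))"
    by (rule sum_PiE_insert[OF aI])
  also have "\<dots> = (\<Sum>y\<in>F a. \<Sum>u\<in>PiE I F. \<Sum>v\<in>PiE J F. h ((mg I u v)(a:=y)))"
    by (rule sum.cong[OF refl], rule insert.IH) (use insert.prems in auto)
  also have "\<dots> = (\<Sum>u\<in>PiE I F. \<Sum>y\<in>F a. \<Sum>v\<in>PiE J F. h ((mg I u v)(a:=y)))"
    by (rule sum.swap)
  also have "\<dots> = (\<Sum>u\<in>PiE I F. \<Sum>y\<in>F a. \<Sum>v\<in>PiE J F. h (mg I u (v(a:=y))))"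
  proof -
    have aI': "a \<notin> I" using aI by simp
    show ?thesis by (simp only: mg_upd[OF aI'])
  qed
  also have "\<dots> = (\<Sum>u\<in>PiE I F. \<Sum>v\<in>PiE (insert a J) F. h (mg I u v))"
    by (simp only: sum_PiE_insert[OF \<open>a \<notin> J\<close>])
  finally show ?case .
qed

lemma ext_count:
  assumes "finite J" "finite B" "B \<inter> J = {}" "card B + card J \<le> d"
  shows "(\<Sum>v\<in>PiE J (\<lambda>_. cube d). (if ind (mg J v w0) (B \<union> J) {1..d} then 1 else 0 :: nat))
       = (if ind w0 B {1..d} then 1 else 0) * (\<Prod>i<card J. 2^d - 2^(card B + i))"
  using assms
proof (induction J rule: finite_induct)
  case empty
  have "mg {} (\<lambda>x. undefined) w0 = w0" unfolding mg_def by simp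
  then show ?case by simp
next
  case (insert a J)
  have aY: "a \<notin> B \<union> J" using insert by auto
  have fY: "finite (B \<union> J)" using insert by auto
  have cY: "card (B \<union> J) = card B + card J" using insert by (simp add: card_Un_disjoint)
  let ?W = "\<lambda>v. mg J v w0"
  let ?Phi = "\<lambda>v. (\<lambda>Z. phi (?W v) Z {1..d}) ` Pow (B \<union> J)"
  have IH: "(\<Sum>v\<in>PiE J (\<lambda>_. cube d). (if ind (mg J v w0) (B \<union> J) {1..d} then 1 else 0 :: nat))
       = (if ind w0 B {1..d} then 1 else 0) * (\<Prod>i<card J. 2^d - 2^(card B + i))"
    by (rule insert.IH) (use insert.prems insert(1,2) in auto)
  have step: "\<And>v y. ind (mg (insert a J) (v(a:=y)) w0) (B \<union> insert a J) {1..d} \<longleftrightarrow>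
        ind (?W v) (B \<union> J) {1..d} \<and> {i\<in>{1..d}. y i} \<notin> ?Phi v"
  proof -
    fix v y
    have "mg (insert a J) (v(a:=y)) w0 = (?W v)(a:=y)" unfolding mg_def by (auto simp: fun_eq_iff)
    moreover have "B \<union> insert a J = insert a (B \<union> J)" by auto
    ultimately show "?thesis v y" using ind_insert[OF aY fY] by simp
  qed
  have cnt: "card {y\<in>cube d. {i\<in>{1..d}. y i} \<notin> ?Phi v} = 2^d - 2^(card B + card J)"
    if "ind (?W v) (B \<union> J) {1..d}" for v
  proof -
    have "card {y\<in>cube d. {i\<in>{1..d}. y i} \<notin> ?Phi v} = card {A\<in>Pow {1..d}. A \<notin> ?Phi v}"
      by (rule card_cube_filter)
    also have "{A\<in>Pow {1..d}. A \<notin> ?Phi v} = Pow {1..d} - ?Phi v" by auto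
    also have "card \<dots> = card (Pow {1..d}) - card (?Phi v)"
      by (rule card_Diff_subset) (use fY phi_subset in auto)
    also have "card (?Phi v) = 2 ^ (card B + card J)"
      using ind_card_image[OF fY that] cY by simp
    finally show ?thesis by (simp add: card_Pow)
  qed
  have "(\<Sum>v\<in>PiE (insert a J) (\<lambda>_. cube d). (if ind (mg (insert a J) v w0) (B \<union> insert a J) {1..d} then 1 else 0 :: nat))
      = (\<Sum>y\<in>cube d. \<Sum>v\<in>PiE J (\<lambda>_. cube d). (if ind (mg (insert a J) (v(a:=y)) w0) (B \<union> insert a J) {1..d} then 1 else 0 :: nat))"
    by (rule sum_PiE_insert[OF \<open>a \<notin> J\<close>])
  also have "\<dots> = (\<Sum>v\<in>PiE J (\<lambda>_. cube d). \<Sum>y\<in>cube d. (if ind (?W v) (B \<union> J) {1..d} \<and> {i\<in>{1..d}. y i} \<notin> ?Phi v then 1 else 0 :: nat))"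
    unfolding step by (rule sum.swap)
  also have "\<dots> = (\<Sum>v\<in>PiE J (\<lambda>_. cube d). (if ind (?W v) (B \<union> J) {1..d} then 1 else 0) * (2^d - 2^(card B + card J)))"
  proof (rule sum.cong[OF refl])
    fix v
    show "(\<Sum>y\<in>cube d. (if ind (?W v) (B \<union> J) {1..d} \<and> {i\<in>{1..d}. y i} \<notin> ?Phi v then 1 else 0 :: nat))
       = (if ind (?W v) (B \<union> J) {1..d} then 1 else 0) * (2^d - 2^(card B + card J))"
    proof (cases "ind (?W v) (B \<union> J) {1..d}")
      case True
      have "(\<Sum>y\<in>cube d. (if {i\<in>{1..d}. y i} \<notin> ?Phi v then 1 else 0 :: nat)) =
            card {y\<in>cube d. {i\<in>{1..d}. y i} \<notin> ?Phi v}"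
        using finite_cube by (simp add: sum.If_cases Int_def)
      then show ?thesis using True cnt[OF True] by simp
    qed simp
  qed
  also have "\<dots> = (\<Sum>v\<in>PiE J (\<lambda>_. cube d). (if ind (?W v) (B \<union> J) {1..d} then 1 else 0)) * (2^d - 2^(card B + card J))"
    by (simp add: sum_distrib_right)
  also have "\<dots> = (if ind w0 B {1..d} then 1 else 0) * (\<Prod>i<card J. 2^d - 2^(card B + i)) * (2^d - 2^(card B + card J))"
    unfolding IH ..
  also have "\<dots> = (if ind w0 B {1..d} then 1 else 0) * (\<Prod>i<card (insert a J). 2^d - 2^(card B + i))"
    using insert(1,2) by simp
  finally show ?case .
qed



lemma Pk_Suc: "Pk (Suc m) = Pk m * (1 - 1 / 2 ^ Suc m)"
  unfolding Pk_def by (simp add: prod.nat_ivl_Suc' mult.commute)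

lemma prod_double: "(\<Prod>i<m. (2::real) ^ Suc m - 2 ^ Suc i) = 2 ^ m * (\<Prod>i<m. 2 ^ m - 2 ^ i)"
proof -
  have "(\<Prod>i<m. (2::real) ^ Suc m - 2 ^ Suc i) = (\<Prod>i<m. 2 * (2 ^ m - 2 ^ i))"
    by (rule prod.cong) (simp_all add: algebra_simps)
  also have "\<dots> = (\<Prod>i<m. (2::real)) * (\<Prod>i<m. 2 ^ m - 2 ^ i)"
    by (rule prod.distrib)
  finally show ?thesis by simp
qed

lemma g_Pk: "(\<Prod>i<m. (2::real) ^ m - 2 ^ i) = 2 ^ (m * m) * Pk m"
proof (induction m)
  case 0
  then show ?case unfolding Pk_def by simp
next
  case (Suc m)
  have "(\<Prod>i<Suc m. (2::real) ^ Suc m - 2 ^ i) = (2 ^ Suc m - 1) * (\<Prod>i<m. 2 ^ Suc m - 2 ^ Suc i)"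
    by (subst prod.lessThan_Suc_shift) simp
  also have "\<dots> = (2 ^ Suc m - 1) * (2 ^ m * (2 ^ (m * m) * Pk m))"
    using prod_double Suc by simp
  also have "\<dots> = 2 ^ (Suc m * Suc m) * Pk (Suc m)"
  proof -
    have e: "Suc m * Suc m = m * m + m + Suc m" by simp
    have p: "(2::real) ^ (Suc m * Suc m) = 2 ^ (m * m) * 2 ^ m * 2 ^ Suc m"
      unfolding e power_add by simp
    have q: "(2::real) ^ Suc m * (1 - 1 / 2 ^ Suc m) = 2 ^ Suc m - 1"
      by (simp add: field_simps)
    show ?thesis unfolding p Pk_Suc using q
      by (metis (no_types, lifting) mult.commute mult.left_commute)
  qed
  finally show ?case .
qed

lemma prod_split: "(\<Prod>i<t. f i) * (\<Prod>i<k. f (t + i)) = (\<Prod>i<t + k. (f i :: real))" for k t :: nat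
  by (induction k) (simp_all add: mult.assoc)

lemma prod_shift: "(\<Prod>i<k. (2::real) ^ (t + k) - 2 ^ (t + i)) = 2 ^ (t * k) * (\<Prod>i<k. 2 ^ k - 2 ^ i)"
proof -
  have "(\<Prod>i<k. (2::real) ^ (t + k) - 2 ^ (t + i)) = (\<Prod>i<k. 2 ^ t * (2 ^ k - 2 ^ i))"
    by (rule prod.cong) (simp_all add: power_add algebra_simps)
  also have "\<dots> = (\<Prod>i<k. (2::real) ^ t) * (\<Prod>i<k. 2 ^ k - 2 ^ i)"
    by (rule prod.distrib)
  finally show ?thesis by (simp add: power_mult)
qed

lemma of_nat_G:
  assumes "p + m \<le> d"
  shows "real (\<Prod>i<m. 2 ^ d - 2 ^ (p + i) :: nat) = (\<Prod>i<m. (2::real) ^ d - 2 ^ (p + i))"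
proof -
  have "real (\<Prod>i<m. 2 ^ d - 2 ^ (p + i) :: nat) = (\<Prod>i<m. real (2 ^ d - 2 ^ (p + i) :: nat))"
    by (rule of_nat_prod)
  also have "\<dots> = (\<Prod>i<m. (2::real) ^ d - 2 ^ (p + i))"
  proof (rule prod.cong[OF refl])
    fix i assume "i \<in> {..<m}"
    then have "p + i \<le> d" using assms by simp
    then have "(2::nat) ^ (p + i) \<le> 2 ^ d" by (rule power_increasing) simp
    then show "real (2 ^ d - 2 ^ (p + i) :: nat) = (2::real) ^ d - 2 ^ (p + i)"
      by (simp add: of_nat_diff)
  qed
  finally show ?thesis .
qed



lemma card_filter_sum: "finite A \<Longrightarrow> card {x\<in>A. P x} = (\<Sum>x\<in>A. if P x then 1 else 0 :: nat)"
  by (simp add: sum.If_cases Int_def)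

lemma ifmult: "(if a \<and> b then 1 else 0 :: nat) = (if a then 1 else 0) * (if b then 1 else 0)"
  by simp

lemma ind_empty: "ind M {} J" unfolding ind_def by auto

lemma trip:
  assumes "finite T" "finite A" "finite Bc" "T \<inter> (A \<union> Bc) = {}" "A \<inter> Bc = {}"
  shows "(\<Sum>w\<in>PiE (T \<union> (A \<union> Bc)) F. h w) =
         (\<Sum>u\<in>PiE T F. \<Sum>v1\<in>PiE A F. \<Sum>v2\<in>PiE Bc F. h (mg T u (mg A v1 v2)))"
proof -
  have "(\<Sum>w\<in>PiE (T \<union> (A \<union> Bc)) F. h w) = (\<Sum>u\<in>PiE T F. \<Sum>v\<in>PiE (A \<union> Bc) F. h (mg T u v))"
    using assms by (intro sum_PiE_union) auto
  also have "\<dots> = (\<Sum>u\<in>PiE T F. \<Sum>v1\<in>PiE A F. \<Sum>v2\<in>PiE Bc F. h (mg T u (mg A v1 v2)))"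
    by (rule sum.cong[OF refl], rule sum_PiE_union) (use assms in auto)
  finally show ?thesis .
qed

lemma core:
  fixes T A Bc :: "nat set"
  assumes fin: "finite T" "finite A" "finite Bc"
    and disj: "T \<inter> A = {}" "T \<inter> Bc = {}" "A \<inter> Bc = {}"
    and cards: "card T = t" "card A = k" "card Bc = k" and dd: "d = t + k"
  shows "card {w\<in>PiE (T \<union> (A \<union> Bc)) (\<lambda>_. cube d). ind w (T \<union> A) {1..d} \<noteq> ind w (T \<union> Bc) {1..d}}
         + 2 * ((\<Prod>i<k. 2^d - 2^(t+i)) * (\<Prod>i<k. 2^d - 2^(t+i)) * (\<Prod>i<t. 2^d - 2^i))
       = 2 * ((2^d)^k * (\<Prod>i<k. 2^d - 2^(t+i)) * (\<Prod>i<t. 2^d - 2^i))"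
proof -
  let ?F = "\<lambda>_::nat. cube d"
  define E :: nat where "E = (\<Prod>i<k. 2^d - 2^(t+i))"
  define GT :: nat where "GT = (\<Prod>i<t. 2^d - 2^i)"
  define c :: nat where "c = (2^d)^k"
  let ?W = "\<lambda>u v1 v2. mg T u (mg A v1 v2)"
  define P1 where "P1 u v1 = ind (mg A v1 u) (T \<union> A) {1..d}" for u v1
  define P2 where "P2 u v2 = ind (mg Bc v2 u) (T \<union> Bc) {1..d}" for u v2
  have d1: "T \<inter> (A \<union> Bc) = {}" using disj by auto
  have tripF: "(\<Sum>w\<in>PiE (T \<union> (A \<union> Bc)) ?F. h w) =
         (\<Sum>u\<in>PiE T ?F. \<Sum>v1\<in>PiE A ?F. \<Sum>v2\<in>PiE Bc ?F. h (?W u v1 v2))" for h :: "_ \<Rightarrow> nat"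
    by (rule trip) (use fin disj d1 in auto)
  have e1: "ind (?W u v1 v2) (T \<union> A) {1..d} = P1 u v1" for u v1 v2
    unfolding P1_def by (rule ind_cong) (use disj in \<open>auto simp: mg_def\<close>)
  have e2: "ind (?W u v1 v2) (T \<union> Bc) {1..d} = P2 u v2" for u v1 v2
    unfolding P2_def by (rule ind_cong) (use disj in \<open>auto simp: mg_def\<close>)
  have s1: "(\<Sum>v1\<in>PiE A ?F. if P1 u v1 then 1 else 0 :: nat) = (if ind u T {1..d} then 1 else 0) * E" for u
    unfolding P1_def E_def using ext_count[OF fin(2) fin(1), of d u] disj cards dd
    by (simp add: Int_commute)
  have s2: "(\<Sum>v2\<in>PiE Bc ?F. if P2 u v2 then 1 else 0 :: nat) = (if ind u T {1..d} then 1 else 0) * E" for u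
    unfolding P2_def E_def using ext_count[OF fin(3) fin(1), of d u] disj cards dd
    by (simp add: Int_commute)
  have sT: "(\<Sum>u\<in>PiE T ?F. if ind u T {1..d} then 1 else 0 :: nat) = GT"
  proof -
    have "(\<Sum>u\<in>PiE T ?F. if ind u T {1..d} then 1 else 0 :: nat) =
          (\<Sum>u\<in>PiE T ?F. if ind (mg T u (\<lambda>_ _. False)) ({} \<union> T) {1..d} then 1 else 0 :: nat)"
    proof (rule sum.cong[OF refl])
      fix u
      have "ind u T {1..d} = ind (mg T u (\<lambda>_ _. False)) ({} \<union> T) {1..d}"
        by simp (rule ind_cong, simp add: mg_def)
      then show "(if ind u T {1..d} then 1 else 0 :: nat) =
          (if ind (mg T u (\<lambda>_ _. False)) ({} \<union> T) {1..d} then 1 else 0)" by simp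
    qed
    also have "\<dots> = GT"
      using ext_count[OF fin(1) finite.emptyI, of d "\<lambda>_ _. False"] cards dd ind_empty
      unfolding GT_def by simp
    finally show ?thesis .
  qed
  have cA: "card (PiE A ?F) = c" "card (PiE Bc ?F) = c"
    using fin cards by (simp_all add: card_PiE card_cube c_def)
  let ?p = "\<lambda>w. ind w (T \<union> A) {1..d}"
  let ?q = "\<lambda>w. ind w (T \<union> Bc) {1..d}"
  have fP: "finite (PiE (T \<union> (A \<union> Bc)) ?F)" using fin by (simp add: finite_PiE finite_cube)
  have Np: "(\<Sum>w\<in>PiE (T \<union> (A \<union> Bc)) ?F. if ?p w then 1 else 0 :: nat) = c * E * GT"
  proof -
    have "(\<Sum>w\<in>PiE (T \<union> (A \<union> Bc)) ?F. if ?p w then 1 else 0 :: nat) =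
      (\<Sum>u\<in>PiE T ?F. \<Sum>v1\<in>PiE A ?F. \<Sum>v2\<in>PiE Bc ?F. if P1 u v1 then 1 else 0)"
      unfolding tripF e1 ..
    also have "\<dots> = (\<Sum>u\<in>PiE T ?F. \<Sum>v1\<in>PiE A ?F. (if P1 u v1 then 1 else 0) * c)"
      using cA by (simp add: mult.commute)
    also have "\<dots> = (\<Sum>u\<in>PiE T ?F. (if ind u T {1..d} then 1 else 0) * E * c)"
      by (simp only: sum_distrib_right[symmetric] s1)
    also have "\<dots> = (\<Sum>u\<in>PiE T ?F. (if ind u T {1..d} then 1 else 0)) * E * c"
      by (simp only: sum_distrib_right[symmetric])
    finally show ?thesis using sT by simp
  qed
  have Nq: "(\<Sum>w\<in>PiE (T \<union> (A \<union> Bc)) ?F. if ?q w then 1 else 0 :: nat) = c * E * GT"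
  proof -
    have "(\<Sum>w\<in>PiE (T \<union> (A \<union> Bc)) ?F. if ?q w then 1 else 0 :: nat) =
      (\<Sum>u\<in>PiE T ?F. \<Sum>v1\<in>PiE A ?F. \<Sum>v2\<in>PiE Bc ?F. if P2 u v2 then 1 else 0)"
      unfolding tripF e2 ..
    also have "\<dots> = (\<Sum>u\<in>PiE T ?F. \<Sum>v1\<in>PiE A ?F. (if ind u T {1..d} then 1 else 0) * E)"
      by (simp only: s2)
    also have "\<dots> = (\<Sum>u\<in>PiE T ?F. c * ((if ind u T {1..d} then 1 else 0) * E))"
      using cA by simp
    also have "\<dots> = c * ((\<Sum>u\<in>PiE T ?F. (if ind u T {1..d} then 1 else 0)) * E)"
      by (simp only: sum_distrib_right[symmetric] sum_distrib_left[symmetric])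
    finally show ?thesis using sT by simp
  qed
  have Nb: "(\<Sum>w\<in>PiE (T \<union> (A \<union> Bc)) ?F. if ?p w \<and> ?q w then 1 else 0 :: nat) = E * E * GT"
  proof -
    have "(\<Sum>w\<in>PiE (T \<union> (A \<union> Bc)) ?F. if ?p w \<and> ?q w then 1 else 0 :: nat) =
      (\<Sum>u\<in>PiE T ?F. \<Sum>v1\<in>PiE A ?F. \<Sum>v2\<in>PiE Bc ?F. (if P1 u v1 then 1 else 0) * (if P2 u v2 then 1 else 0))"
      unfolding tripF e1 e2 by (simp only: ifmult)
    also have "\<dots> = (\<Sum>u\<in>PiE T ?F. (\<Sum>v1\<in>PiE A ?F. (if P1 u v1 then 1 else 0)) * (\<Sum>v2\<in>PiE Bc ?F. (if P2 u v2 then 1 else 0)))"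
      by (simp only: sum_distrib_left[symmetric] sum_distrib_right[symmetric])
    also have "\<dots> = (\<Sum>u\<in>PiE T ?F. (if ind u T {1..d} then 1 else 0) * (E * E))"
      by (simp only: s1 s2) (rule sum.cong, simp_all)
    also have "\<dots> = (\<Sum>u\<in>PiE T ?F. (if ind u T {1..d} then 1 else 0)) * (E * E)"
      by (simp only: sum_distrib_right[symmetric])
    finally show ?thesis using sT by simp
  qed
  have pw: "\<And>w. (if ?p w \<noteq> ?q w then 1 else 0 :: nat) + 2 * (if ?p w \<and> ?q w then 1 else 0)
              = (if ?p w then 1 else 0) + (if ?q w then 1 else 0)" by auto
  have "card {w\<in>PiE (T \<union> (A \<union> Bc)) ?F. ?p w \<noteq> ?q w} + 2 * (E * E * GT)
      = (\<Sum>w\<in>PiE (T \<union> (A \<union> Bc)) ?F. (if ?p w \<noteq> ?q w then 1 else 0 :: nat) + 2 * (if ?p w \<and> ?q w then 1 else 0))"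
    unfolding card_filter_sum[OF fP] Nb[symmetric] by (simp add: sum.distrib sum_distrib_left)
  also have "\<dots> = 2 * (c * E * GT)"
    unfolding pw sum.distrib Np Nq by simp
  finally show ?thesis unfolding E_def GT_def c_def .
qed



lemma dt_eq:
  assumes "\<And>us u0. deriv_val K f us u0 = R us"
  shows "dt K n f = real (2^n * card {us\<in>PiE {1..K} (\<lambda>_. cube n). R us}) / 2^((K+1)*n)"
proof -
  have "{(u0, us). u0 \<in> cube n \<and> us \<in> PiE {1..K} (\<lambda>_. cube n) \<and> deriv_val K f us u0}
        = cube n \<times> {us\<in>PiE {1..K} (\<lambda>_. cube n). R us}"
    using assms by auto
  then show ?thesis unfolding dt_def by (simp add: card_cartesian_product card_cube)
qed

definition tr :: "nat \<Rightarrow> nat \<Rightarrow> (nat \<Rightarrow> nat \<Rightarrow> bool) \<Rightarrow> (nat \<Rightarrow> nat \<Rightarrow> bool)" where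
  "tr n K us = (\<lambda>j\<in>{1..n}. \<lambda>i. if i \<in> {1..K} then us i j else False)"

lemma tr_in: "tr n K us \<in> PiE {1..n} (\<lambda>_. cube K)"
  unfolding tr_def cube_def by (auto simp: restrict_PiE_iff)

lemma tr_app: "j \<in> {1..n} \<Longrightarrow> tr n K us j = (\<lambda>i. if i \<in> {1..K} then us i j else False)"
  unfolding tr_def by (rule restrict_apply')

lemma tr_out: assumes "j \<notin> {1..n}" shows "tr n K us j = undefined"
  unfolding tr_def restrict_apply using assms by (rule if_not_P)

lemma tr_inv:
  assumes "us \<in> PiE {1..K} (\<lambda>_. cube n)"
  shows "tr K n (tr n K us) = us"
proof (rule ext)
  fix i
  show "tr K n (tr n K us) i = us i"
  proof (cases "i \<in> {1..K}")
    case True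
    have "us i \<in> cube n" using assms True by (rule PiE_mem)
    then have c: "\<And>j. us i j \<Longrightarrow> j \<in> {1..n}" unfolding cube_def by auto
    show ?thesis
    proof (rule ext)
      fix j
      show "tr K n (tr n K us) i j = us i j"
      proof (cases "j \<in> {1..n}")
        case jT: True
        have "tr K n (tr n K us) i j = tr n K us j i" using tr_app[OF True] jT by simp
        also have "\<dots> = us i j" using tr_app[OF jT] True by simp
        finally show ?thesis .
      next
        case jF: False
        have "tr K n (tr n K us) i j = (if j \<in> {1..n} then tr n K us j i else False)"
          using tr_app[OF True] by simp
        also have "\<dots> = False" using jF by (rule if_not_P)
        finally have "tr K n (tr n K us) i j = False" .
        then show ?thesis using c jF by blast
      qed
    qed
  next
    case False
    have "us i = undefined" using PiE_arb[OF assms False] .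
    moreover have "tr K n (tr n K us) i = undefined" by (rule tr_out[OF False])
    ultimately show ?thesis by simp
  qed
qed

lemma tr_card:
  "card {us\<in>PiE {1..K} (\<lambda>_. cube n). Q (tr n K us)} = card {w\<in>PiE {1..n} (\<lambda>_. cube K). Q w}"
proof (rule bij_betw_same_card[of "tr n K"], rule bij_betw_byWitness[where f' = "tr K n"])
  show "\<forall>a\<in>{us\<in>PiE {1..K} (\<lambda>_. cube n). Q (tr n K us)}. tr K n (tr n K a) = a"
  proof
    fix a assume "a \<in> {us\<in>PiE {1..K} (\<lambda>_. cube n). Q (tr n K us)}"
    then show "tr K n (tr n K a) = a" by (intro tr_inv) simp
  qed
  show "\<forall>a\<in>{w\<in>PiE {1..n} (\<lambda>_. cube K). Q w}. tr n K (tr K n a) = a"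
  proof
    fix a assume "a \<in> {w\<in>PiE {1..n} (\<lambda>_. cube K). Q w}"
    then show "tr n K (tr K n a) = a" by (intro tr_inv) simp
  qed
  show "tr n K ` {us\<in>PiE {1..K} (\<lambda>_. cube n). Q (tr n K us)} \<subseteq> {w\<in>PiE {1..n} (\<lambda>_. cube K). Q w}"
  proof
    fix x assume "x \<in> tr n K ` {us\<in>PiE {1..K} (\<lambda>_. cube n). Q (tr n K us)}"
    then obtain us where "x = tr n K us" "Q (tr n K us)" by blast
    then show "x \<in> {w\<in>PiE {1..n} (\<lambda>_. cube K). Q w}" using tr_in[of n K us] by simp
  qed
  show "tr K n ` {w\<in>PiE {1..n} (\<lambda>_. cube K). Q w} \<subseteq> {us\<in>PiE {1..K} (\<lambda>_. cube n). Q (tr n K us)}"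
  proof
    fix x assume "x \<in> tr K n ` {w\<in>PiE {1..n} (\<lambda>_. cube K). Q w}"
    then obtain w where w: "x = tr K n w" "w \<in> PiE {1..n} (\<lambda>_. cube K)" "Q w" by blast
    then have "tr n K x = w" using tr_inv[OF w(2)] by simp
    then show "x \<in> {us\<in>PiE {1..K} (\<lambda>_. cube n). Q (tr n K us)}" using tr_in[of K n w] w by simp
  qed
qed

lemma rows_cols:
  assumes "S \<subseteq> {1..n}" "card S = K"
  shows "ind us {1..K} S = ind (tr n K us) S {1..K}"
proof -
  have fS: "finite S" using assms(1) finite_subset by auto
  have "ind us {1..K} S = ind (\<lambda>i j. tr n K us j i) {1..K} S"
  proof (rule ind_cong)
    fix i j assume "i \<in> {1..K}" "j \<in> S"
    then have "j \<in> {1..n}" using assms(1) by blast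
    then show "us i j = tr n K us j i" using \<open>i \<in> {1..K}\<close> unfolding tr_def by simp
  qed
  also have "\<dots> = ind (tr n K us) S {1..K}"
    by (rule duality_iff) (use fS assms(2) in auto)
  finally show ?thesis .
qed

lemma count_reduce:
  assumes "Sall \<subseteq> {1..n}" and cong: "\<And>w w'. (\<And>j. j \<in> Sall \<Longrightarrow> w j = w' j) \<Longrightarrow> Q w = Q w'"
  shows "card {w\<in>PiE {1..n} (\<lambda>_. cube K). Q w} = (2^K)^(n - card Sall) * card {u\<in>PiE Sall (\<lambda>_. cube K). Q u}"
proof -
  let ?R = "{1..n} - Sall"
  let ?F = "\<lambda>_::nat. cube K"
  have fS: "finite Sall" using assms(1) finite_subset by auto
  have un: "{1..n} = Sall \<union> ?R" using assms(1) by auto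
  have "card {w\<in>PiE {1..n} ?F. Q w} = (\<Sum>w\<in>PiE {1..n} ?F. if Q w then 1 else 0)"
    by (rule card_filter_sum) (simp add: finite_PiE finite_cube)
  also have "\<dots> = (\<Sum>w\<in>PiE (Sall \<union> ?R) ?F. if Q w then 1 else 0)" using un by simp
  also have "\<dots> = (\<Sum>u\<in>PiE Sall ?F. \<Sum>v\<in>PiE ?R ?F. if Q (mg Sall u v) then 1 else 0)"
    by (rule sum_PiE_union) auto
  also have "\<dots> = (\<Sum>u\<in>PiE Sall ?F. \<Sum>v\<in>PiE ?R ?F. if Q u then 1 else 0)"
  proof (rule sum.cong[OF refl], rule sum.cong[OF refl])
    fix u v
    have "Q (mg Sall u v) = Q u" by (rule cong) (simp add: mg_def)
    then show "(if Q (mg Sall u v) then 1 else 0 :: nat) = (if Q u then 1 else 0)" by simp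
  qed
  also have "\<dots> = (\<Sum>u\<in>PiE Sall ?F. if Q u then 1 else 0) * card (PiE ?R ?F)"
  proof -
    have "\<And>u. (\<Sum>v\<in>PiE ?R ?F. if Q u then 1 else 0::nat) = (if Q u then 1 else 0) * card (PiE ?R ?F)"
      by (simp add: mult.commute)
    then show ?thesis by (simp only: sum_distrib_right)
  qed
  also have "card (PiE ?R ?F) = (2^K)^(n - card Sall)"
    using assms(1) fS by (simp add: card_PiE card_cube card_Diff_subset)
  also have "(\<Sum>u\<in>PiE Sall ?F. if Q u then 1 else 0) = card {u\<in>PiE Sall ?F. Q u}"
    by (rule card_filter_sum[symmetric]) (simp add: finite_PiE finite_cube fS)
  finally show ?thesis by simp
qed

lemma count_T:
  assumes "finite T" "card T \<le> d"
  shows "card {u\<in>PiE T (\<lambda>_. cube d). ind u T {1..d}} = (\<Prod>i<card T. 2^d - 2^i)"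
proof -
  have "card {u\<in>PiE T (\<lambda>_. cube d). ind u T {1..d}} = (\<Sum>u\<in>PiE T (\<lambda>_. cube d). if ind u T {1..d} then 1 else 0)"
    by (rule card_filter_sum) (simp add: finite_PiE finite_cube assms)
  also have "\<dots> = (\<Sum>u\<in>PiE T (\<lambda>_. cube d). if ind (mg T u (\<lambda>_ _. False)) ({} \<union> T) {1..d} then 1 else 0 :: nat)"
  proof (rule sum.cong[OF refl])
    fix u
    have "ind u T {1..d} = ind (mg T u (\<lambda>_ _. False)) ({} \<union> T) {1..d}"
      by simp (rule ind_cong, simp add: mg_def)
    then show "(if ind u T {1..d} then 1 else 0 :: nat) =
        (if ind (mg T u (\<lambda>_ _. False)) ({} \<union> T) {1..d} then 1 else 0)" by simp
  qed
  also have "\<dots> = (\<Prod>i<card T. 2^d - 2^i)"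
    using ext_count[OF assms(1) finite.emptyI, of d "\<lambda>_ _. False"] assms ind_empty by simp
  finally show ?thesis .
qed



lemma exp1:
  assumes "k \<le> n"
  shows "(2::real)^n * (2^k)^(n-k) * 2^(k*k) = 2^((k+1)*n)"
proof -
  obtain m where n: "n = k + m" using assms le_Suc_ex by blast
  have "(2::real)^n * (2^k)^(n-k) * 2^(k*k) = 2^(n + k*m + k*k)"
    unfolding n by (simp add: power_add power_mult)
  also have "n + k*m + k*k = (k+1)*n" unfolding n by (simp add: algebra_simps)
  finally show ?thesis .
qed

lemma case1:
  assumes "k \<le> n"
  shows "dt k n (\<lambda>x. \<forall>i\<in>{1..k}. x i) = Pk k"
proof -
  have R: "\<And>us u0. deriv_val k (\<lambda>x. \<forall>i\<in>{1..k}. x i) us u0 = ind us {1..k} {1..k}"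
    by (rule deriv_mono) simp_all
  have sub: "{1..k} \<subseteq> {1..n}" using assms by auto
  have "card {us\<in>PiE {1..k} (\<lambda>_. cube n). ind us {1..k} {1..k}}
      = card {us\<in>PiE {1..k} (\<lambda>_. cube n). ind (tr n k us) {1..k} {1..k}}"
    using rows_cols[OF sub, of k] by simp
  also have "\<dots> = card {w\<in>PiE {1..n} (\<lambda>_. cube k). ind w {1..k} {1..k}}"
    by (rule tr_card)
  also have "\<dots> = (2^k)^(n - card {1..k}) * card {u\<in>PiE {1..k} (\<lambda>_. cube k). ind u {1..k} {1..k}}"
    by (rule count_reduce[OF sub]) (rule ind_cong, auto)
  also have "card {u\<in>PiE {1..k} (\<lambda>_. cube k). ind u {1..k} {1..k}} = (\<Prod>i<k. 2^k - 2^i)"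
    using count_T[of "{1..k}" k] by simp
  finally have cnt: "card {us\<in>PiE {1..k} (\<lambda>_. cube n). ind us {1..k} {1..k}} = (2^k)^(n - k) * (\<Prod>i<k. 2^k - 2^i)"
    by simp
  have G: "real (\<Prod>i<k. 2^k - 2^i :: nat) = 2^(k*k) * Pk k"
    using of_nat_G[of 0 k k] g_Pk[of k] by simp
  have "dt k n (\<lambda>x. \<forall>i\<in>{1..k}. x i) = real (2^n * ((2^k)^(n - k) * (\<Prod>i<k. 2^k - 2^i))) / 2^((k+1)*n)"
    using dt_eq[OF R, of n] cnt by simp
  also have "real (2^n * ((2^k)^(n - k) * (\<Prod>i<k. 2^k - 2^i :: nat))) = ((2::real)^n * (2^k)^(n-k) * 2^(k*k)) * Pk k"
    using G by simp
  also have "\<dots> = 2^((k+1)*n) * Pk k" using exp1[OF assms] by simp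
  finally show ?thesis by simp
qed

lemma exp3:
  assumes "2*k+t \<le> n"
  shows "(2::real)^n * (2^(t+k))^(n-(2*k+t)) * 2^((t+k)*(t+k)) * 2^((t+k)*k) = 2^((t+k+1)*n)"
proof -
  obtain m where n: "n = 2*k+t + m" using assms le_Suc_ex by blast
  have "(2::real)^n * (2^(t+k))^(n-(2*k+t)) * 2^((t+k)*(t+k)) * 2^((t+k)*k) = 2^(n + (t+k)*m + (t+k)*(t+k) + (t+k)*k)"
    unfolding n by (simp add: power_add power_mult)
  also have "n + (t+k)*m + (t+k)*(t+k) + (t+k)*k = (t+k+1)*n" unfolding n by (simp add: algebra_simps)
  finally show ?thesis .
qed

lemma case3:
  assumes "2*k+t \<le> n"
  shows "dt (k + t) n (\<lambda>x. (\<forall>i\<in>{2*k+1..2*k+t}. x i) \<and>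
                              ((\<forall>i\<in>{1..k}. x i) \<noteq> (\<forall>i\<in>{k+1..2*k}. x i)))
             = 2 * Pk (k + t) * (1 - Pk k)"
proof -
  define T where "T = {2*k+1..2*k+t}"
  define A where "A = {1..k}"
  define Bc where "Bc = {k+1..2*k}"
  have Kc: "k + t = t + k" by simp
  have fin: "finite T" "finite A" "finite Bc" unfolding T_def A_def Bc_def by simp_all
  have disj: "T \<inter> A = {}" "T \<inter> Bc = {}" "A \<inter> Bc = {}" unfolding T_def A_def Bc_def by auto
  have cards: "card T = t" "card A = k" "card Bc = k" unfolding T_def A_def Bc_def by simp_all
  have cTA: "card (T \<union> A) = t + k" using fin disj cards by (simp add: card_Un_disjoint)
  have cTB: "card (T \<union> Bc) = t + k" using fin disj cards by (simp add: card_Un_disjoint)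
  let ?Sall = "T \<union> (A \<union> Bc)"
  have cS: "card ?Sall = 2*k+t" using fin disj cards by (simp add: card_Un_disjoint Int_Un_distrib)
  have subS: "?Sall \<subseteq> {1..n}" using assms unfolding T_def A_def Bc_def by auto
  have subA: "T \<union> A \<subseteq> {1..n}" and subB: "T \<union> Bc \<subseteq> {1..n}" using subS by auto
  have feq: "(\<lambda>x. (\<forall>i\<in>{2*k+1..2*k+t}. x i) \<and> ((\<forall>i\<in>{1..k}. x i) \<noteq> (\<forall>i\<in>{k+1..2*k}. x i)))
           = (\<lambda>x. (\<forall>i\<in>T \<union> A. x i) \<noteq> (\<forall>i\<in>T \<union> Bc. x i))"
    unfolding T_def[symmetric] A_def[symmetric] Bc_def[symmetric] ball_Un by (rule ext) blast
  let ?Q = "\<lambda>w. ind w (T \<union> A) {1..t+k} \<noteq> ind w (T \<union> Bc) {1..t+k}"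
  have R: "deriv_val (t+k) (\<lambda>x. (\<forall>i\<in>T \<union> A. x i) \<noteq> (\<forall>i\<in>T \<union> Bc. x i)) us u0
           = (ind us {1..t+k} (T \<union> A) \<noteq> ind us {1..t+k} (T \<union> Bc))" for us u0
    unfolding deriv_xor using deriv_mono[of "T \<union> A" "t+k"] deriv_mono[of "T \<union> Bc" "t+k"] fin cTA cTB by simp
  have "card {us\<in>PiE {1..t+k} (\<lambda>_. cube n). ind us {1..t+k} (T \<union> A) \<noteq> ind us {1..t+k} (T \<union> Bc)}
      = card {us\<in>PiE {1..t+k} (\<lambda>_. cube n). ?Q (tr n (t+k) us)}"
    using rows_cols[OF subA cTA] rows_cols[OF subB cTB] by simp
  also have "\<dots> = card {w\<in>PiE {1..n} (\<lambda>_. cube (t+k)). ?Q w}"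
    by (rule tr_card)
  also have "\<dots> = (2^(t+k))^(n - card ?Sall) * card {u\<in>PiE ?Sall (\<lambda>_. cube (t+k)). ?Q u}"
  proof (rule count_reduce[OF subS])
    fix w w' :: "nat \<Rightarrow> nat \<Rightarrow> bool" assume h: "\<And>j. j \<in> ?Sall \<Longrightarrow> w j = w' j"
    have "ind w (T \<union> A) {1..t+k} = ind w' (T \<union> A) {1..t+k}" by (rule ind_cong) (use h in auto)
    moreover have "ind w (T \<union> Bc) {1..t+k} = ind w' (T \<union> Bc) {1..t+k}" by (rule ind_cong) (use h in auto)
    ultimately show "?Q w = ?Q w'" by simp
  qed
  finally have cnt: "card {us\<in>PiE {1..t+k} (\<lambda>_. cube n). ind us {1..t+k} (T \<union> A) \<noteq> ind us {1..t+k} (T \<union> Bc)}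
      = (2^(t+k))^(n - (2*k+t)) * card {u\<in>PiE ?Sall (\<lambda>_. cube (t+k)). ?Q u}"
    unfolding cS .
  define N where "N = card {u\<in>PiE ?Sall (\<lambda>_. cube (t+k)). ?Q u}"
  define E :: nat where "E = (\<Prod>i<k. 2^(t+k) - 2^(t+i))"
  define GT :: nat where "GT = (\<Prod>i<t. 2^(t+k) - 2^i)"
  have core': "N + 2 * (E * E * GT) = 2 * ((2^(t+k))^k * E * GT)"
    unfolding N_def E_def GT_def by (rule core[OF fin disj cards]) simp
  have rE: "real E = 2^((t+k)*k) * Pk k"
  proof -
    have "real E = (\<Prod>i<k. (2::real)^(t+k) - 2^(t+i))" unfolding E_def by (rule of_nat_G) simp
    also have "\<dots> = 2^(t*k) * (2^(k*k) * Pk k)" using prod_shift[of t k] g_Pk[of k] by simp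
    also have "\<dots> = 2^((t+k)*k) * Pk k" by (simp add: power_add algebra_simps)
    finally show ?thesis .
  qed
  have rX: "real GT * real E = 2^((t+k)*(t+k)) * Pk (t+k)"
  proof -
    have "real GT = (\<Prod>i<t. (2::real)^(t+k) - 2^i)" unfolding GT_def using of_nat_G[of 0 t "t+k"] by simp
    moreover have "real E = (\<Prod>i<k. (2::real)^(t+k) - 2^(t+i))" unfolding E_def by (rule of_nat_G) simp
    ultimately have "real GT * real E = (\<Prod>i<t+k. (2::real)^(t+k) - 2^i)"
      using prod_split[of "\<lambda>i. (2::real)^(t+k) - 2^i" t k] by simp
    also have "\<dots> = 2^((t+k)*(t+k)) * Pk (t+k)" by (rule g_Pk)
    finally show ?thesis .
  qed
  have rN: "real N = 2 * (2^((t+k)*(t+k)) * Pk (t+k)) * (2^((t+k)*k) * (1 - Pk k))"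
  proof -
    have "real N + 2 * (real E * real E * real GT) = 2 * (2^((t+k)*k) * real E * real GT)"
      using arg_cong[OF core', of real] by (simp add: power_mult)
    then have "real N = 2 * (real GT * real E) * (2^((t+k)*k) - real E)"
      by (simp add: algebra_simps)
    also have "\<dots> = 2 * (2^((t+k)*(t+k)) * Pk (t+k)) * (2^((t+k)*k) * (1 - Pk k))"
      by (subst rX, subst rE) (simp add: algebra_simps)
    finally show ?thesis .
  qed
  have "dt (t + k) n (\<lambda>x. (\<forall>i\<in>T \<union> A. x i) \<noteq> (\<forall>i\<in>T \<union> Bc. x i))
      = real (2^n * ((2^(t+k))^(n - (2*k+t)) * N)) / 2^((t+k+1)*n)"
    using dt_eq[OF R, of n] cnt unfolding N_def by simp
  also have "real (2^n * ((2^(t+k))^(n - (2*k+t)) * N)) =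
      ((2::real)^n * (2^(t+k))^(n-(2*k+t)) * 2^((t+k)*(t+k)) * 2^((t+k)*k)) * (2 * Pk (t+k) * (1 - Pk k))"
  proof -
    have "real (2^n * ((2^(t+k))^(n - (2*k+t)) * N)) = 2^n * (2^(t+k))^(n-(2*k+t)) * real N" by simp
    also have "\<dots> = ((2::real)^n * (2^(t+k))^(n-(2*k+t)) * 2^((t+k)*(t+k)) * 2^((t+k)*k)) * (2 * Pk (t+k) * (1 - Pk k))"
      unfolding rN by (simp only: mult_ac)
    finally show ?thesis .
  qed
  also have "\<dots> = 2^((t+k+1)*n) * (2 * Pk (t+k) * (1 - Pk k))" unfolding exp3[OF assms] ..
  finally show ?thesis unfolding feq Kc by simp
qed

theorem corollary2:
  fixes k t :: nat
  assumes "k \<ge> 1"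
  shows "(\<forall>n \<ge> k. dt k n (\<lambda>x. \<forall>i\<in>{1..k}. x i) = Pk k)
       \<and> (\<forall>n \<ge> 2 * k.
           dt k n (\<lambda>x. (\<forall>i\<in>{1..k}. x i) \<noteq> (\<forall>i\<in>{k+1..2*k}. x i)) = 2 * Pk k * (1 - Pk k))
       \<and> (\<forall>n \<ge> 2 * k + t.
           dt (k + t) n (\<lambda>x. (\<forall>i\<in>{2*k+1..2*k+t}. x i) \<and>
                              ((\<forall>i\<in>{1..k}. x i) \<noteq> (\<forall>i\<in>{k+1..2*k}. x i)))
             = 2 * Pk (k + t) * (1 - Pk k))"
proof (intro conjI allI impI)
  fix n assume "k \<le> n" then show "dt k n (\<lambda>x. \<forall>i\<in>{1..k}. x i) = Pk k" by (rule case1)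
next
  fix n assume h: "2 * k \<le> n"
  have "dt (k + 0) n (\<lambda>x. (\<forall>i\<in>{2*k+1..2*k+0}. x i) \<and>
                              ((\<forall>i\<in>{1..k}. x i) \<noteq> (\<forall>i\<in>{k+1..2*k}. x i))) = 2 * Pk (k + 0) * (1 - Pk k)"
    by (rule case3) (use h in simp)
  moreover have "(\<lambda>x. (\<forall>i\<in>{2*k+1..2*k+0}. x i) \<and> ((\<forall>i\<in>{1..k}. x i) \<noteq> (\<forall>i\<in>{k+1..2*k}. x i)))
     = (\<lambda>x. (\<forall>i\<in>{1..k}. x i) \<noteq> (\<forall>i\<in>{k+1..2*k}. x i))" by simp
  ultimately show "dt k n (\<lambda>x. (\<forall>i\<in>{1..k}. x i) \<noteq> (\<forall>i\<in>{k+1..2*k}. x i)) = 2 * Pk k * (1 - Pk k)"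
    by simp
next
  fix n assume "2 * k + t \<le> n"
  then show "dt (k + t) n (\<lambda>x. (\<forall>i\<in>{2*k+1..2*k+t}. x i) \<and>
                              ((\<forall>i\<in>{1..k}. x i) \<noteq> (\<forall>i\<in>{k+1..2*k}. x i)))
             = 2 * Pk (k + t) * (1 - Pk k)" by (rule case3)
qed


end
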